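(* Let $\varepsilon>0$, let $\Sigma_1,\ldots,\Sigma_k$ be real symmetric positive definite $d\times d$ matrices, and let $\lambda_1,\ldots,\lambda_k>0$ with $\sum_{i=1}^k\lambda_i=1$. Then there exists a unique positive definite $\Sigma\in\mathcal{M}_{d\times d}(\mathbb{R})$ such that $$\sum_{i=1}^k\lambda_i\Big(\Sigma^{-1/2}\big(\Sigma^{1/2}\Sigma_i\Sigma^{1/2}+(\tfrac{\varepsilon}{4})^2I_d\big)^{1/2}\Sigma^{-1/2}+\tfrac{\varepsilon}{4}\Sigma^{-1}\Big)=I_d.$$
   Context: $A^{1/2}$ denotes the unique symmetric positive definite square root of a symmetric positive definite matrix $A$. *)

theory Defs
  imports "HOL-Analysis.Analysis"
begin

text \<open>Real d x d matrices are rendered as \<open>real^'d^'d\<close>, with d = CARD('d).\<close>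

definition sym_mat :: "real^'n^'n \<Rightarrow> bool" where
  "sym_mat A \<longleftrightarrow> transpose A = A"

definition pos_def :: "real^'n^'n \<Rightarrow> bool" where
  "pos_def A \<longleftrightarrow> sym_mat A \<and> (\<forall>x. x \<noteq> 0 \<longrightarrow> x \<bullet> (A *v x) > 0)"

definition mat_sqrt :: "real^'n^'n \<Rightarrow> real^'n^'n" where
  "mat_sqrt A = (THE B. pos_def B \<and> B ** B = A)"

end

theory Submission
  imports Defs
begin


lemma sym_mat_iff:
  fixes A :: "real^'n^'n"
  shows "sym_mat A \<longleftrightarrow> (\<forall>x y. x \<bullet> (A *v y) = (A *v x) \<bullet> y)"
proof
  assume "sym_mat A"
  then have "transpose A = A" by (simp add: sym_mat_def)
  then show "\<forall>x y. x \<bullet> (A *v y) = (A *v x) \<bullet> y"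
    by (metis dot_lmul_matrix transpose_matrix_vector)
next
  assume h: "\<forall>x y. x \<bullet> (A *v y) = (A *v x) \<bullet> y"
  have "transpose A $ i $ j = A $ i $ j" for i j
  proof -
    have "axis j 1 \<bullet> (A *v axis i 1) = (A *v axis j 1) \<bullet> axis i 1" using h by blast
    then show ?thesis
      by (simp add: transpose_def matrix_vector_mult_basis column_def inner_axis' inner_axis)
  qed
  then show "sym_mat A" by (simp add: sym_mat_def vec_eq_iff)
qed

lemma sym_matD: "sym_mat (A::real^'n^'n) \<Longrightarrow> x \<bullet> (A *v y) = (A *v x) \<bullet> y"
  using sym_mat_iff by blast

lemma inv_props:
  fixes A :: "real^'n^'n"
  assumes "invertible A"
  shows "A ** matrix_inv A = mat 1" "matrix_inv A ** A = mat 1"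
proof -
  have "\<exists>A'. A ** A' = mat 1 \<and> A' ** A = mat 1" using assms invertible_def by blast
  then have "A ** matrix_inv A = mat 1 \<and> matrix_inv A ** A = mat 1"
    unfolding matrix_inv_def by (rule someI_ex)
  then show "A ** matrix_inv A = mat 1" "matrix_inv A ** A = mat 1" by auto
qed

lemma pos_def_invertible:
  fixes A :: "real^'n^'n"
  assumes "pos_def A" shows "invertible A"
proof -
  have inj: "inj ((*v) A)"
  proof (rule injI)
    fix x y assume "A *v x = A *v y"
    then have "A *v (x - y) = 0" by (simp add: matrix_vector_mult_diff_distrib)
    then have "(x - y) \<bullet> (A *v (x - y)) = 0" by simp
    then show "x = y" using assms unfolding pos_def_def by (metis less_irrefl right_minus_eq)
  qed
  show ?thesis using matrix_left_invertible_injective inj invertible_left_inverse by blast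
qed



definition orthon :: "(real^'n) set \<Rightarrow> bool" where
  "orthon C \<longleftrightarrow> (\<forall>c\<in>C. norm c = 1) \<and> (\<forall>c\<in>C. \<forall>c'\<in>C. c \<noteq> c' \<longrightarrow> c \<bullet> c' = 0)"

lemma orthon_finite:
  assumes "orthon (C :: (real^'n) set)"
  shows "finite C \<and> card C \<le> CARD('n)"
proof -
  have "pairwise orthogonal C" using assms by (auto simp: orthon_def pairwise_def orthogonal_def)
  moreover have "0 \<notin> C" using assms by (auto simp: orthon_def)
  ultimately have "independent C" by (rule pairwise_orthogonal_independent)
  then show ?thesis using independent_bound by fastforce
qed

lemma min_rayleigh:
  fixes A :: "real^'n^'n"
  assumes sym: "sym_mat A" and V: "subspace V" and inv: "\<And>x. x \<in> V \<Longrightarrow> A *v x \<in> V"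
    and v: "v \<in> V" "norm v = 1"
    and mn: "\<And>x. x \<in> V \<Longrightarrow> norm x = 1 \<Longrightarrow> v \<bullet> (A *v v) \<le> x \<bullet> (A *v x)"
  shows "A *v v = (v \<bullet> (A *v v)) *\<^sub>R v"
proof -
  define \<mu> where "\<mu> = v \<bullet> (A *v v)"
  have mn2: "\<mu> * (x \<bullet> x) \<le> x \<bullet> (A *v x)" if "x \<in> V" for x
  proof (cases "x = 0")
    case True then show ?thesis by simp
  next
    case False
    define u where "u = (1 / norm x) *\<^sub>R x"
    have "u \<in> V" using that V by (simp add: u_def subspace_scale)
    moreover have "norm u = 1" using False by (simp add: u_def)
    ultimately have "\<mu> \<le> u \<bullet> (A *v u)" using mn \<mu>_def by blast
    also have "u \<bullet> (A *v u) = (x \<bullet> (A *v x)) / (norm x)^2"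
      by (simp add: u_def matrix_vector_mult_scaleR power2_eq_square)
    finally have "\<mu> * (norm x)^2 \<le> x \<bullet> (A *v x)" using False by (simp add: field_simps)
    then show ?thesis by (simp add: power2_norm_eq_inner)
  qed
  define w where "w = A *v v - \<mu> *\<^sub>R v"
  have wV: "w \<in> V" using inv v V by (simp add: w_def subspace_diff subspace_scale)
  have vv: "v \<bullet> v = 1" using v by (simp add: norm_eq_1)
  have wv: "w \<bullet> v = 0"
  proof -
    have "(A *v v) \<bullet> v = v \<bullet> (A *v v)" by (rule inner_commute)
    then show ?thesis by (simp add: w_def inner_diff_left vv \<mu>_def)
  qed
  have wAv: "w \<bullet> (A *v v) = w \<bullet> w"
  proof -
    have "A *v v = w + \<mu> *\<^sub>R v" by (simp add: w_def)
    then have "w \<bullet> (A *v v) = w \<bullet> w + \<mu> * (w \<bullet> v)" by (simp add: inner_add_right)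
    then show ?thesis using wv by simp
  qed
  have symAvw: "v \<bullet> (A *v w) = w \<bullet> (A *v v)"
    using sym_matD[OF sym] by (simp add: inner_commute)
  have vw: "v \<bullet> w = 0" using wv by (simp add: inner_commute)
  define K where "K = w \<bullet> (A *v w) - \<mu> * (w \<bullet> w)"
  have key: "0 \<le> 2 * t * (w \<bullet> w) + t^2 * K" for t :: real
  proof -
    define y where "y = v + t *\<^sub>R w"
    have "y \<in> V" using v wV V by (simp add: y_def subspace_add subspace_scale)
    then have "\<mu> * (y \<bullet> y) \<le> y \<bullet> (A *v y)" by (rule mn2)
    moreover have "y \<bullet> y = 1 + t^2 * (w \<bullet> w)"
      by (simp add: y_def inner_add_left inner_add_right vv wv vw power2_eq_square)
    moreover have "y \<bullet> (A *v y) = \<mu> + 2 * t * (w \<bullet> w) + t^2 * (w \<bullet> (A *v w))"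
      using symAvw wAv
      by (simp add: y_def inner_add_left inner_add_right matrix_vector_right_distrib
          matrix_vector_mult_scaleR \<mu>_def power2_eq_square algebra_simps)
    ultimately show ?thesis by (simp add: K_def algebra_simps)
  qed
  have "w \<bullet> w = 0"
  proof (rule ccontr)
    assume ne: "w \<bullet> w \<noteq> 0"
    then have pos: "w \<bullet> w > 0" by (simp add: order_le_neq_trans)
    define t where "t = - (w \<bullet> w) / (\<bar>K\<bar> + 1)"
    have "0 \<le> 2 * t * (w \<bullet> w) + t^2 * K" by (rule key)
    also have "t^2 * K \<le> t^2 * \<bar>K\<bar>" by (simp add: mult_left_mono)
    finally have "0 \<le> 2 * t * (w \<bullet> w) + t^2 * \<bar>K\<bar>" by simp
    moreover have "2 * t * (w \<bullet> w) + t^2 * \<bar>K\<bar> = (w \<bullet> w)^2 / (\<bar>K\<bar> + 1) * (\<bar>K\<bar> / (\<bar>K\<bar> + 1) - 2)"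
    proof -
      have gen: "\<And>W M a::real. a \<noteq> 0 \<Longrightarrow> 2*(-W/a)*W + (-W/a)^2*M = W^2/a*(M/a - 2)"
        by (simp add: field_simps power2_eq_square)
      have "\<bar>K\<bar> + 1 \<noteq> 0" by linarith
      from gen[OF this] show ?thesis by (simp add: t_def)
    qed
    moreover have "(w \<bullet> w)^2 / (\<bar>K\<bar> + 1) * (\<bar>K\<bar> / (\<bar>K\<bar> + 1) - 2) < 0"
    proof -
      have "\<bar>K\<bar> / (\<bar>K\<bar> + 1) < 1" by (simp add: divide_less_eq)
      then have "\<bar>K\<bar> / (\<bar>K\<bar> + 1) - 2 < 0" by linarith
      moreover have "(w \<bullet> w)^2 / (\<bar>K\<bar> + 1) > 0" using pos by simp
      ultimately show ?thesis using mult_pos_neg by blast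
    qed
    ultimately show False by linarith
  qed
  then have "w = 0" by simp
  then show ?thesis by (simp add: w_def \<mu>_def)
qed



lemma orthon_inner_sum:
  assumes "orthon C" "finite C" "c \<in> C"
  shows "c \<bullet> (\<Sum>c'\<in>C. f c' *\<^sub>R c') = f c"
proof -
  have "c \<bullet> (\<Sum>c'\<in>C. f c' *\<^sub>R c') = (\<Sum>c'\<in>C. f c' * (c \<bullet> c'))"
    by (simp add: inner_sum_right)
  also have "\<dots> = (\<Sum>c'\<in>C. if c' = c then f c else 0)"
  proof (rule sum.cong)
    fix c' assume "c' \<in> C"
    show "f c' * (c \<bullet> c') = (if c' = c then f c else 0)"
      using assms \<open>c' \<in> C\<close> by (auto simp: orthon_def norm_eq_1)
  qed simp
  also have "\<dots> = f c" using assms by simp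
  finally show ?thesis .
qed

lemma spectral:
  fixes A :: "real^'n^'n"
  assumes sym: "sym_mat A"
  shows "\<exists>C. orthon C \<and> finite C \<and> (\<forall>c\<in>C. A *v c = (c \<bullet> (A *v c)) *\<^sub>R c)
            \<and> (\<forall>x. x = (\<Sum>c\<in>C. (c \<bullet> x) *\<^sub>R c))"
proof -
  define P where "P C \<longleftrightarrow> orthon C \<and> (\<forall>c\<in>C. A *v c = (c \<bullet> (A *v c)) *\<^sub>R c)" for C
  have P0: "P {}" by (simp add: P_def orthon_def)
  have Pb: "\<forall>C. P C \<longrightarrow> card C < CARD('n) + 1"
    using orthon_finite unfolding P_def by fastforce
  obtain C where PC: "P C" and maxC: "\<forall>D. P D \<longrightarrow> card D \<le> card C"
    using ex_has_greatest_nat[OF P0 Pb] by blast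
  have oC: "orthon C" and eC: "\<forall>c\<in>C. A *v c = (c \<bullet> (A *v c)) *\<^sub>R c" using PC by (auto simp: P_def)
  have fC: "finite C" using orthon_finite[OF oC] by simp
  have expand: "x = (\<Sum>c\<in>C. (c \<bullet> x) *\<^sub>R c)" for x
  proof (rule ccontr)
    assume ne: "x \<noteq> (\<Sum>c\<in>C. (c \<bullet> x) *\<^sub>R c)"
    define z where "z = x - (\<Sum>c\<in>C. (c \<bullet> x) *\<^sub>R c)"
    have z0: "z \<noteq> 0" using ne by (simp add: z_def)
    have zC: "c \<bullet> z = 0" if "c \<in> C" for c
      using orthon_inner_sum[OF oC fC that, of "\<lambda>c. c \<bullet> x"] by (simp add: z_def inner_diff_right)
    define V where "V = {y. \<forall>c\<in>C. orthogonal c y}"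
    have V: "subspace V" unfolding V_def by (rule subspace_orthogonal_to_vectors)
    have zV: "z \<in> V" using zC by (simp add: V_def orthogonal_def)
    have invV: "A *v y \<in> V" if "y \<in> V" for y
    proof -
      have "c \<bullet> (A *v y) = 0" if "c \<in> C" for c
      proof -
        have "c \<bullet> (A *v y) = (A *v c) \<bullet> y" by (rule sym_matD[OF sym])
        also have "\<dots> = (c \<bullet> (A *v c)) * (c \<bullet> y)" using eC \<open>c \<in> C\<close> by (metis inner_scaleR_left)
        also have "c \<bullet> y = 0" using \<open>y \<in> V\<close> \<open>c \<in> C\<close> by (simp add: V_def orthogonal_def)
        finally show ?thesis by simp
      qed
      then show ?thesis by (simp add: V_def orthogonal_def)
    qed
    define S where "S = V \<inter> sphere 0 1"
    have cS: "compact S" unfolding S_def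
      using closed_subspace[OF V] compact_sphere by (rule closed_Int_compact)
    have "(1 / norm z) *\<^sub>R z \<in> S" using z0 zV V by (simp add: S_def subspace_scale)
    then have neS: "S \<noteq> {}" by blast
    have contS: "continuous_on S (\<lambda>x. x \<bullet> (A *v x))"
      by (intro continuous_intros linear_continuous_on matrix_vector_mul_bounded_linear)
    obtain v where vS: "v \<in> S" and vmin: "\<forall>y\<in>S. v \<bullet> (A *v v) \<le> y \<bullet> (A *v y)"
      using continuous_attains_inf[OF cS neS contS] by blast
    have vV: "v \<in> V" and nv: "norm v = 1" using vS by (auto simp: S_def)
    have Av: "A *v v = (v \<bullet> (A *v v)) *\<^sub>R v"
      by (rule min_rayleigh[OF sym V invV vV nv]) (use vmin in \<open>auto simp: S_def\<close>)
    have vC: "v \<notin> C"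
    proof
      assume "v \<in> C"
      then have "v \<bullet> v = 0" using vV by (simp add: V_def orthogonal_def)
      then show False using nv by simp
    qed
    have "P (insert v C)"
      unfolding P_def orthon_def
    proof (intro conjI ballI impI)
      fix c assume "c \<in> insert v C" then show "norm c = 1" using nv oC by (auto simp: orthon_def)
    next
      fix c c' assume "c \<in> insert v C" "c' \<in> insert v C" "c \<noteq> c'"
      then show "c \<bullet> c' = 0" using oC vV
        by (auto simp: orthon_def V_def orthogonal_def inner_commute)
    next
      fix c assume "c \<in> insert v C" then show "A *v c = (c \<bullet> (A *v c)) *\<^sub>R c" using Av eC by auto
    qed
    then have "card (insert v C) \<le> card C" using maxC by blast
    then show False using vC fC by simp
  qed
  show ?thesis using oC fC eC expand by blast
qed



definition eigsys :: "real^'n^'n \<Rightarrow> (real^'n) set \<Rightarrow> bool" where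
  "eigsys A C \<longleftrightarrow> orthon C \<and> finite C \<and> (\<forall>c\<in>C. A *v c = (c \<bullet> (A *v c)) *\<^sub>R c)
            \<and> (\<forall>x. x = (\<Sum>c\<in>C. (c \<bullet> x) *\<^sub>R c))"

lemma eigsys_exists: "sym_mat A \<Longrightarrow> \<exists>C. eigsys A C"
  unfolding eigsys_def by (rule spectral)

lemma mv_sum: "(A::real^'n^'m) *v (\<Sum>i\<in>I. f i) = (\<Sum>i\<in>I. A *v f i)"
proof (induction I rule: infinite_finite_induct)
  case (insert x F) then show ?case by (simp add: matrix_vector_right_distrib)
qed simp_all

lemma eigsys_apply:
  assumes "eigsys A C"
  shows "A *v x = (\<Sum>c\<in>C. ((c \<bullet> (A *v c)) * (c \<bullet> x)) *\<^sub>R c)"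
proof -
  have "A *v x = A *v (\<Sum>c\<in>C. (c \<bullet> x) *\<^sub>R c)" using assms unfolding eigsys_def by metis
  also have "\<dots> = (\<Sum>c\<in>C. (c \<bullet> x) *\<^sub>R (A *v c))" by (simp add: mv_sum matrix_vector_mult_scaleR)
  also have "\<dots> = (\<Sum>c\<in>C. ((c \<bullet> (A *v c)) * (c \<bullet> x)) *\<^sub>R c)"
  proof (rule sum.cong)
    fix c assume "c \<in> C"
    then have e: "A *v c = (c \<bullet> (A *v c)) *\<^sub>R c" using assms by (simp add: eigsys_def)
    show "(c \<bullet> x) *\<^sub>R (A *v c) = ((c \<bullet> (A *v c)) * (c \<bullet> x)) *\<^sub>R c"
      by (metis e scaleR_scaleR mult.commute)
  qed simp
  finally show ?thesis .
qed

lemma eigsys_parseval: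
  assumes "eigsys A C"
  shows "x \<bullet> x = (\<Sum>c\<in>C. (c \<bullet> x)^2)"
proof -
  have "x \<bullet> x = x \<bullet> (\<Sum>c\<in>C. (c \<bullet> x) *\<^sub>R c)" using assms unfolding eigsys_def by metis
  then show ?thesis by (simp add: inner_sum_right power2_eq_square inner_commute)
qed

lemma eigsys_quad:
  assumes "eigsys A C"
  shows "x \<bullet> (A *v x) = (\<Sum>c\<in>C. (c \<bullet> (A *v c)) * (c \<bullet> x)^2)"
  by (subst eigsys_apply[OF assms, of x]) (simp add: inner_sum_right power2_eq_square inner_commute mult.assoc)

lemma eigsys_nonzero:
  assumes "eigsys A C" "x \<noteq> 0"
  shows "\<exists>c\<in>C. c \<bullet> x \<noteq> 0"
proof (rule ccontr)
  assume "\<not> ?thesis"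
  then have "x \<bullet> x = 0" using eigsys_parseval[OF assms(1)] by simp
  then show False using assms by simp
qed

lemma eigsys_norm: "eigsys A C \<Longrightarrow> c \<in> C \<Longrightarrow> norm c = 1"
  by (simp add: eigsys_def orthon_def)

lemma pos_def_eig_pos:
  assumes "pos_def A" "eigsys A C" "c \<in> C"
  shows "c \<bullet> (A *v c) > 0"
proof -
  have "c \<noteq> 0" using eigsys_norm[OF assms(2,3)] by auto
  then show ?thesis using assms(1) by (simp add: pos_def_def)
qed

lemma sqrt_exists:
  fixes A :: "real^'n^'n"
  assumes pd: "pos_def A"
  shows "\<exists>B. pos_def B \<and> B ** B = A"
proof -
  have sym: "sym_mat A" using pd by (simp add: pos_def_def)
  obtain C where C: "eigsys A C" using eigsys_exists[OF sym] by blast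
  have fC: "finite C" using C by (simp add: eigsys_def)
  define \<mu> where "\<mu> c = c \<bullet> (A *v c)" for c
  have \<mu>pos: "\<mu> c > 0" if "c \<in> C" for c using pos_def_eig_pos[OF pd C that] by (simp add: \<mu>_def)
  define f where "f x = (\<Sum>c\<in>C. (sqrt (\<mu> c) * (c \<bullet> x)) *\<^sub>R c)" for x
  have lin: "linear f"
    by (rule linearI) (simp_all add: f_def inner_add_right distrib_left scaleR_add_left sum.distrib
        scaleR_sum_right mult_ac)
  define B where "B = matrix f"
  have Bx: "B *v x = f x" for x using lin by (simp add: B_def matrix_works)
  have cf: "c \<bullet> f x = sqrt (\<mu> c) * (c \<bullet> x)" if "c \<in> C" for c x
    unfolding f_def using orthon_inner_sum[of C c "\<lambda>c. sqrt (\<mu> c) * (c \<bullet> x)"] C fC that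
    by (simp add: eigsys_def)
  have symB: "sym_mat B"
    unfolding sym_mat_iff Bx
    by (simp add: f_def inner_sum_right inner_sum_left mult_ac inner_commute)
  have posB: "pos_def B"
    unfolding pos_def_def
  proof (intro conjI allI impI symB)
    fix x :: "real^'n" assume "x \<noteq> 0"
    then obtain c0 where c0: "c0 \<in> C" "c0 \<bullet> x \<noteq> 0" using eigsys_nonzero[OF C] by blast
    have "x \<bullet> (B *v x) = (\<Sum>c\<in>C. sqrt (\<mu> c) * (c \<bullet> x)^2)"
      by (simp add: Bx f_def inner_sum_right power2_eq_square inner_commute mult_ac)
    also have "\<dots> > 0"
    proof (rule sum_pos2[OF fC c0(1)])
      show "0 < sqrt (\<mu> c0) * (c0 \<bullet> x)\<^sup>2" using \<mu>pos[OF c0(1)] c0(2) by simp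
      fix c assume "c \<in> C"
      then have "\<mu> c > 0" using \<mu>pos by blast
      then show "0 \<le> sqrt (\<mu> c) * (c \<bullet> x)\<^sup>2" by simp
    qed
    finally show "x \<bullet> (B *v x) > 0" .
  qed
  have "B ** B = A"
  proof (subst matrix_eq, intro allI)
    fix x
    have "(B ** B) *v x = f (f x)" by (simp add: matrix_vector_mul_assoc[symmetric] Bx)
    also have "\<dots> = (\<Sum>c\<in>C. (\<mu> c * (c \<bullet> x)) *\<^sub>R c)"
      unfolding f_def[of "f x"]
      by (rule sum.cong) (use \<mu>pos cf in \<open>auto simp: mult.assoc[symmetric] less_imp_le\<close>)
    also have "\<dots> = A *v x" by (subst eigsys_apply[OF C, of x]) (simp add: \<mu>_def)
    finally show "(B ** B) *v x = A *v x" .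
  qed
  then show ?thesis using posB by blast
qed

lemma sqrt_unique:
  fixes B D :: "real^'n^'n"
  assumes pB: "pos_def B" and pD: "pos_def D" and eq: "B ** B = D ** D"
  shows "B = D"
proof -
  obtain C where C: "eigsys B C" using eigsys_exists pB by (auto simp: pos_def_def)
  have onC: "D *v c = B *v c" if "c \<in> C" for c
  proof -
    define \<beta> where "\<beta> = c \<bullet> (B *v c)"
    have bpos: "\<beta> > 0" using pos_def_eig_pos[OF pB C that] by (simp add: \<beta>_def)
    have Bc: "B *v c = \<beta> *\<^sub>R c" using C that by (simp add: eigsys_def \<beta>_def)
    have "D *v (D *v c) = (D ** D) *v c" by (simp add: matrix_vector_mul_assoc)
    also have "\<dots> = (B ** B) *v c" using eq by simp
    also have "\<dots> = B *v (B *v c)" by (simp add: matrix_vector_mul_assoc)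
    also have "\<dots> = (\<beta> * \<beta>) *\<^sub>R c" by (simp add: Bc matrix_vector_mult_scaleR)
    finally have DDc: "D *v (D *v c) = (\<beta> * \<beta>) *\<^sub>R c" .
    define w where "w = D *v c - \<beta> *\<^sub>R c"
    have "D *v w + \<beta> *\<^sub>R w = 0"
      by (simp add: w_def DDc matrix_vector_mult_diff_distrib matrix_vector_mult_scaleR algebra_simps)
    then have "w \<bullet> (D *v w) + \<beta> * (w \<bullet> w) = 0"
      by (metis inner_add_right inner_scaleR_right inner_zero_right)
    moreover have "w \<bullet> (D *v w) \<ge> 0"
      using pD by (cases "w = 0") (auto simp: pos_def_def less_imp_le)
    moreover have "\<beta> * (w \<bullet> w) \<ge> 0" using bpos by simp
    ultimately have "\<beta> * (w \<bullet> w) = 0" by linarith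
    then have "w = 0" using bpos by simp
    then show ?thesis by (simp add: w_def Bc)
  qed
  show ?thesis
  proof (subst matrix_eq, intro allI)
    fix x
    have "x = (\<Sum>c\<in>C. (c \<bullet> x) *\<^sub>R c)" using C by (simp add: eigsys_def)
    then have "B *v x = (\<Sum>c\<in>C. (c \<bullet> x) *\<^sub>R (B *v c)) \<and> D *v x = (\<Sum>c\<in>C. (c \<bullet> x) *\<^sub>R (D *v c))"
      by (metis (no_types, lifting) mv_sum matrix_vector_mult_scaleR sum.cong)
    then show "B *v x = D *v x" using onC by (simp cong: sum.cong)
  qed
qed

lemma mat_sqrt:
  fixes A :: "real^'n^'n"
  assumes "pos_def A"
  shows "pos_def (mat_sqrt A)" "mat_sqrt A ** mat_sqrt A = A"
proof -
  obtain B where B: "pos_def B" "B ** B = A" using sqrt_exists[OF assms] by blast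
  have "mat_sqrt A = B" unfolding mat_sqrt_def
    by (rule the_equality) (use B sqrt_unique in auto)
  then show "pos_def (mat_sqrt A)" "mat_sqrt A ** mat_sqrt A = A" using B by auto
qed

lemma mat_sqrt_eq:
  fixes A B :: "real^'n^'n"
  assumes "pos_def B" "B ** B = A"
  shows "mat_sqrt A = B"
  unfolding mat_sqrt_def by (rule the_equality) (use assms sqrt_unique in auto)



lemma mm_radd: "((A::real^'n^'m) + B) ** C = A ** C + B ** C"
  by (simp add: matrix_matrix_mult_def vec_eq_iff distrib_right sum.distrib)
lemma mm_lsub: "(A::real^'n^'m) ** (B - C) = A ** B - A ** C"
  by (simp add: matrix_matrix_mult_def vec_eq_iff right_diff_distrib sum_subtractf)
lemma mm_rsub: "((A::real^'n^'m) - B) ** C = A ** C - B ** C"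
  by (simp add: matrix_matrix_mult_def vec_eq_iff left_diff_distrib sum_subtractf)
lemma mm_sum_left: "(\<Sum>i\<in>I. f i) ** (B::real^'p^'n) = (\<Sum>i\<in>I. f i ** B)"
  by (induction I rule: infinite_finite_induct) (simp_all add: mm_radd)
lemma mm_sum_right: "(B::real^'p^'n) ** (\<Sum>i\<in>I. f i) = (\<Sum>i\<in>I. B ** f i)"
  by (induction I rule: infinite_finite_induct) (simp_all add: matrix_add_ldistrib)
lemma trace_scaleR: "trace (r *\<^sub>R (A::real^'n^'n)) = r * trace A"
  by (simp add: trace_def sum_distrib_left)
lemma trace_sum: "trace (\<Sum>i\<in>I. (f i::real^'n^'n)) = (\<Sum>i\<in>I. trace (f i))"
  by (induction I rule: infinite_finite_induct) (simp_all add: trace_add trace_0[simplified])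

lemma trace_form:
  fixes M P :: "real^'n^'n"
  shows "trace (transpose M ** P ** M) = (\<Sum>j\<in>UNIV. column j M \<bullet> (P *v column j M))"
proof -
  have "(transpose M ** P ** M) $ j $ j = column j M \<bullet> (P *v column j M)" for j
  proof -
    have "(transpose M ** P ** M) $ j $ j = (\<Sum>k\<in>UNIV. (\<Sum>l\<in>UNIV. M$l$j * P$l$k) * M$k$j)"
      by (simp add: matrix_matrix_mult_def transpose_def)
    also have "\<dots> = (\<Sum>k\<in>UNIV. \<Sum>l\<in>UNIV. M$l$j * P$l$k * M$k$j)"
      by (simp add: sum_distrib_right)
    also have "\<dots> = (\<Sum>l\<in>UNIV. \<Sum>k\<in>UNIV. M$l$j * P$l$k * M$k$j)"
      by (rule sum.swap)
    also have "\<dots> = (\<Sum>l\<in>UNIV. M$l$j * (\<Sum>k\<in>UNIV. P$l$k * M$k$j))"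
      by (simp add: sum_distrib_left mult.assoc)
    also have "\<dots> = column j M \<bullet> (P *v column j M)"
      by (simp add: column_def matrix_vector_mult_def inner_vec_def)
    finally show ?thesis .
  qed
  then show ?thesis by (simp add: trace_def)
qed

lemma inner_mat_trace:
  fixes D N :: "real^'n^'n"
  shows "D \<bullet> N = trace (transpose D ** N)"
  by (simp add: trace_def matrix_matrix_mult_def transpose_def inner_vec_def) (rule sum.swap)

lemma inner_mat_columns:
  fixes D :: "real^'n^'n"
  shows "D \<bullet> D = (\<Sum>j\<in>UNIV. column j D \<bullet> column j D)"
  using trace_form[of D "mat 1"] by (simp add: inner_mat_trace)

lemma pos_def_lower:
  fixes X :: "real^'n^'n"
  assumes "pos_def X"
  shows "\<exists>m>0. \<forall>x. m * (x \<bullet> x) \<le> x \<bullet> (X *v x)"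
proof -
  obtain C where C: "eigsys X C" using eigsys_exists assms by (auto simp: pos_def_def)
  have fC: "finite C" using C by (simp add: eigsys_def)
  define m where "m = Min (insert 1 ((\<lambda>c. c \<bullet> (X *v c)) ` C))"
  have mpos: "m > 0" unfolding m_def using fC pos_def_eig_pos[OF assms C] by auto
  have mle: "m \<le> c \<bullet> (X *v c)" if "c \<in> C" for c unfolding m_def using fC that by auto
  have "m * (x \<bullet> x) \<le> x \<bullet> (X *v x)" for x
  proof -
    have "m * (x \<bullet> x) = (\<Sum>c\<in>C. m * (c \<bullet> x)^2)"
      by (simp add: eigsys_parseval[OF C, of x] sum_distrib_left)
    also have "\<dots> \<le> (\<Sum>c\<in>C. (c \<bullet> (X *v c)) * (c \<bullet> x)^2)"
      by (rule sum_mono) (simp add: mle mult_right_mono)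
    also have "\<dots> = x \<bullet> (X *v x)" by (rule eigsys_quad[OF C, symmetric])
    finally show ?thesis .
  qed
  then show ?thesis using mpos by blast
qed

lemma pos_def_psd: "pos_def X \<Longrightarrow> 0 \<le> x \<bullet> (X *v x)"
  by (cases "x = 0") (auto simp: pos_def_def less_imp_le)

lemma sqrt_gt:
  fixes P :: "real^'n^'n"
  assumes pd: "pos_def P" and c: "c > 0"
    and sq: "\<And>x. x \<noteq> 0 \<Longrightarrow> x \<bullet> ((P ** P) *v x) > c^2 * (x \<bullet> x)"
    and x: "x \<noteq> 0"
  shows "x \<bullet> (P *v x) > c * (x \<bullet> x)"
proof -
  obtain C where C: "eigsys P C" using eigsys_exists pd by (auto simp: pos_def_def)
  have fC: "finite C" using C by (simp add: eigsys_def)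
  have big: "c'' \<bullet> (P *v c'') > c" if "c'' \<in> C" for c''
  proof -
    define p where "p = c'' \<bullet> (P *v c'')"
    have ppos: "p > 0" using pos_def_eig_pos[OF pd C that] by (simp add: p_def)
    have Pc: "P *v c'' = p *\<^sub>R c''" using C that by (simp add: eigsys_def p_def)
    have n1: "c'' \<bullet> c'' = 1" using eigsys_norm[OF C that] by (simp add: norm_eq_1)
    have "c'' \<noteq> 0" using n1 by auto
    then have "c'' \<bullet> ((P ** P) *v c'') > c^2 * (c'' \<bullet> c'')" by (rule sq)
    moreover have "(P ** P) *v c'' = (p * p) *\<^sub>R c''"
      by (simp add: matrix_vector_mul_assoc[symmetric] Pc matrix_vector_mult_scaleR)
    ultimately have "p^2 > c^2" using n1 by (simp add: power2_eq_square)
    then have "p > c" using ppos c by (smt (verit) power_mono)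
    then show ?thesis by (simp add: p_def)
  qed
  obtain c0 where c0: "c0 \<in> C" "c0 \<bullet> x \<noteq> 0" using eigsys_nonzero[OF C x] by blast
  have "0 < (\<Sum>c''\<in>C. (c'' \<bullet> (P *v c'') - c) * (c'' \<bullet> x)^2)"
  proof (rule sum_pos2[OF fC c0(1)])
    show "0 < (c0 \<bullet> (P *v c0) - c) * (c0 \<bullet> x)\<^sup>2" using big[OF c0(1)] c0(2) by simp
    fix c'' assume "c'' \<in> C" then show "0 \<le> (c'' \<bullet> (P *v c'') - c) * (c'' \<bullet> x)\<^sup>2"
      using big by (simp add: less_imp_le)
  qed
  also have "\<dots> = x \<bullet> (P *v x) - c * (x \<bullet> x)"
    by (simp add: eigsys_quad[OF C, of x] eigsys_parseval[OF C, of x] left_diff_distrib sum_subtractf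
        sum_distrib_left)
  finally show ?thesis by simp
qed



lemma sym_transpose: "sym_mat X \<Longrightarrow> transpose X = X" by (simp add: sym_mat_def)

lemma trace_pos:
  fixes X P Q :: "real^'n^'n"
  assumes X: "sym_mat X" and P: "pos_def P" and Q: "pos_def Q"
  shows "trace (X ** P ** X ** Q) \<ge> 0" "trace (X ** P ** X ** Q) = 0 \<Longrightarrow> X = 0"
proof -
  define V where "V = mat_sqrt Q"
  have V: "pos_def V" "V ** V = Q" using mat_sqrt[OF Q] by (auto simp: V_def)
  define M where "M = X ** V"
  have tM: "transpose M = V ** X"
    using V(1) X by (simp add: M_def matrix_transpose_mul pos_def_def sym_mat_def)
  have "trace (X ** P ** X ** Q) = trace ((X ** P ** X ** V) ** V)"
    by (simp add: V(2)[symmetric] matrix_mul_assoc)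
  also have "\<dots> = trace (V ** (X ** P ** X ** V))" by (rule trace_mul_sym)
  also have "\<dots> = trace (transpose M ** P ** M)" unfolding tM by (simp add: M_def matrix_mul_assoc)
  also have "\<dots> = (\<Sum>j\<in>UNIV. column j M \<bullet> (P *v column j M))" by (rule trace_form)
  finally have eq: "trace (X ** P ** X ** Q) = (\<Sum>j\<in>UNIV. column j M \<bullet> (P *v column j M))" .
  have nn: "\<forall>j\<in>UNIV. 0 \<le> column j M \<bullet> (P *v column j M)" using pos_def_psd[OF P] by blast
  show "trace (X ** P ** X ** Q) \<ge> 0" unfolding eq by (rule sum_nonneg) (use nn in auto)
  assume "trace (X ** P ** X ** Q) = 0"
  then have "\<forall>j\<in>UNIV. column j M \<bullet> (P *v column j M) = 0"
    using sum_nonneg_eq_0_iff[of UNIV "\<lambda>j. column j M \<bullet> (P *v column j M)"] nn eq by simp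
  then have "column j M = 0" for j using P unfolding pos_def_def by (metis less_irrefl UNIV_I)
  then have M0: "M = 0" by (simp add: vec_eq_iff column_def) 
  have "invertible V" using V(1) by (rule pos_def_invertible)
  then have "X = M ** matrix_inv V" using inv_props[of V] by (simp add: M_def matrix_mul_assoc[symmetric])
  then show "X = 0" using M0 by simp
qed

lemma sqrt_lipschitz:
  fixes A B X Y :: "real^'n^'n"
  assumes X: "pos_def X" "X ** X = A" and Y: "pos_def Y" "Y ** Y = B"
    and m: "m > 0" "\<And>x. m * (x \<bullet> x) \<le> x \<bullet> (X *v x)"
  shows "m * norm (X - Y) \<le> norm (A - B)"
proof -
  define D where "D = X - Y"
  have tD: "transpose D = D" using X Y by (simp add: D_def pos_def_def sym_mat_def transpose_def vec_eq_iff)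
  have AB: "A - B = X ** D + D ** Y"
    by (simp add: D_def X(2)[symmetric] Y(2)[symmetric] mm_lsub mm_rsub)
  have "D \<bullet> (A - B) = trace (transpose D ** X ** D) + trace (transpose D ** Y ** D)"
  proof -
    have "D \<bullet> (A - B) = trace (D ** (X ** D)) + trace (D ** (D ** Y))"
      by (simp add: inner_mat_trace tD AB matrix_add_ldistrib trace_add)
    also have "trace (D ** (D ** Y)) = trace ((D ** Y) ** D)" by (rule trace_mul_sym)
    finally show ?thesis by (simp add: tD matrix_mul_assoc)
  qed
  moreover have "trace (transpose D ** X ** D) \<ge> m * (D \<bullet> D)"
  proof -
    have "m * (D \<bullet> D) = (\<Sum>j\<in>UNIV. m * (column j D \<bullet> column j D))"
      by (simp add: inner_mat_columns sum_distrib_left)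
    also have "\<dots> \<le> (\<Sum>j\<in>UNIV. column j D \<bullet> (X *v column j D))"
      by (rule sum_mono) (rule m(2))
    also have "\<dots> = trace (transpose D ** X ** D)" by (rule trace_form[symmetric])
    finally show ?thesis .
  qed
  moreover have "trace (transpose D ** Y ** D) \<ge> 0"
    unfolding trace_form by (rule sum_nonneg) (rule pos_def_psd[OF Y(1)])
  ultimately have "m * (D \<bullet> D) \<le> D \<bullet> (A - B)" by linarith
  also have "\<dots> \<le> norm D * norm (A - B)" by (rule norm_cauchy_schwarz)
  finally have "m * (norm D * norm D) \<le> norm D * norm (A - B)"
    by (simp add: power2_norm_eq_inner[symmetric] power2_eq_square)
  then show ?thesis
    by (cases "norm D = 0") (auto simp: D_def mult.left_commute[of m] mult_le_cancel_left)
qed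

lemma mat_sqrt_continuous: "continuous_on {A :: real^'n^'n. pos_def A} mat_sqrt"
  unfolding continuous_on_iff
proof (intro ballI allI impI)
  fix A :: "real^'n^'n" and e :: real
  assume A: "A \<in> {A. pos_def A}" and e: "e > 0"
  have pA: "pos_def A" using A by simp
  obtain m where m: "m > 0" "\<And>x. m * (x \<bullet> x) \<le> x \<bullet> (mat_sqrt A *v x)"
    using pos_def_lower[OF mat_sqrt(1)[OF pA]] by blast
  show "\<exists>d>0. \<forall>B\<in>{A. pos_def A}. dist B A < d \<longrightarrow> dist (mat_sqrt B) (mat_sqrt A) < e"
  proof (intro exI[of _ "m * e"] conjI ballI impI)
    show "m * e > 0" using m e by simp
    fix B assume B: "B \<in> {A. pos_def A}" and d: "dist B A < m * e"
    have pB: "pos_def B" using B by simp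
    have "m * norm (mat_sqrt A - mat_sqrt B) \<le> norm (A - B)"
      by (rule sqrt_lipschitz[OF mat_sqrt[OF pA] mat_sqrt[OF pB] m])
    then have "m * dist (mat_sqrt B) (mat_sqrt A) < m * e"
      using d by (simp add: dist_norm norm_minus_commute)
    then show "dist (mat_sqrt B) (mat_sqrt A) < e" using m(1) by simp
  qed
qed



lemma sym_diff: "sym_mat (A::real^'n^'n) \<Longrightarrow> sym_mat B \<Longrightarrow> sym_mat (A - B)"
  by (simp add: sym_mat_def transpose_def vec_eq_iff)

lemma pos_def_sym: "pos_def A \<Longrightarrow> sym_mat A" by (simp add: pos_def_def)

lemma pd_inv:
  fixes G :: "real^'n^'n"
  assumes G: "pos_def G"
  shows "pos_def (matrix_inv G)"
proof -
  have iG: "invertible G" using G by (rule pos_def_invertible)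
  note inv = inv_props[OF iG]
  define H where "H = matrix_inv G"
  have tG: "transpose G = G" using G by (simp add: pos_def_def sym_mat_def)
  have "transpose H ** G = mat 1"
    by (metis inv(1) H_def matrix_transpose_mul tG transpose_mat)
  then have "transpose H ** (G ** H) = H" by (simp add: matrix_mul_assoc)
  moreover have "G ** H = mat 1" using inv by (simp add: H_def)
  ultimately have tH: "transpose H = H" by simp
  show ?thesis unfolding pos_def_def sym_mat_def
  proof (intro conjI allI impI)
    show "transpose (matrix_inv G) = matrix_inv G" using tH H_def by simp
    fix x :: "real^'n" assume x: "x \<noteq> 0"
    define y where "y = H *v x"
    have xGy: "x = G *v y" using inv by (simp add: y_def H_def matrix_vector_mul_assoc)
    have "y \<noteq> 0" using x xGy by auto
    then have "y \<bullet> (G *v y) > 0" using G by (simp add: pos_def_def)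
    also have "y \<bullet> (G *v y) = x \<bullet> (matrix_inv G *v x)"
    proof -
      have "y \<bullet> (G *v y) = y \<bullet> x" using xGy by simp
      also have "\<dots> = x \<bullet> (matrix_inv G *v x)" by (simp add: inner_commute y_def H_def)
      finally show ?thesis .
    qed
    finally show "x \<bullet> (matrix_inv G *v x) > 0" .
  qed
qed



lemmas mvs = matrix_vector_mul_assoc[symmetric] matrix_vector_mult_add_rdistrib
  matrix_vector_mult_diff_rdistrib matrix_vector_right_distrib matrix_vector_mult_diff_distrib
  matrix_vector_mult_scaleR scaleR_matrix_vector_assoc[symmetric]

lemma mm_neg: "(A::real^'n^'m) ** (- B) = - (A ** B)"
  by (simp add: matrix_matrix_mult_def vec_eq_iff sum_negf)
lemma trace_neg: "trace (- (A::real^'n^'n)) = - trace A"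
  by (simp add: trace_def sum_negf)

lemma trace_ED:
  fixes G G' S S' Sm :: "real^'n^'n"
  assumes a: "a > 0" and pG: "pos_def G" and pG': "pos_def G'" and pS: "pos_def S" and pS': "pos_def S'"
    and eq1: "G ** S ** G + a *\<^sub>R G = Sm" and eq2: "G' ** S' ** G' + a *\<^sub>R G' = Sm"
  shows "trace ((G - G') ** (S - S')) \<le> 0"
proof -
  define E where "E = G - G'"
  define D where "D = S - S'"
  define Gi where "Gi = matrix_inv G"
  define Gpi where "Gpi = matrix_inv G'"
  have i1: "G *v (Gi *v y) = y" for y
    using inv_props(1)[OF pos_def_invertible[OF pG]] by (simp add: Gi_def matrix_vector_mul_assoc)
  have i2: "Gpi *v (G' *v y) = y" for y
    using inv_props(2)[OF pos_def_invertible[OF pG']] by (simp add: Gpi_def matrix_vector_mul_assoc)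
  have "a *\<^sub>R E + E ** S ** G + G' ** S' ** E + G' ** D ** G
        = (G ** S ** G + a *\<^sub>R G) - (G' ** S' ** G' + a *\<^sub>R G')"
    by (simp add: matrix_eq E_def D_def mvs algebra_simps)
  then have Z0: "a *\<^sub>R E + E ** S ** G + G' ** S' ** E + G' ** D ** G = 0"
    using eq1 eq2 by simp
  have "Gpi ** (a *\<^sub>R E + E ** S ** G + G' ** S' ** E + G' ** D ** G) ** Gi
        = a *\<^sub>R (Gpi ** E ** Gi) + Gpi ** E ** S + S' ** E ** Gi + D"
    by (simp add: matrix_eq E_def D_def mvs i1 i2 algebra_simps)
  then have "a *\<^sub>R (Gpi ** E ** Gi) + Gpi ** E ** S + S' ** E ** Gi + D = 0"
    using Z0 by simp
  then have Deq: "D = - (a *\<^sub>R (Gpi ** E ** Gi)) - Gpi ** E ** S - S' ** E ** Gi"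
    by (simp add: algebra_simps eq_neg_iff_add_eq_0)
  have "trace (E ** D) = - (a * trace (E ** Gpi ** E ** Gi)) - trace (E ** Gpi ** E ** S)
          - trace (E ** S' ** E ** Gi)"
    unfolding Deq
    by (simp add: mm_lsub matrix_scalar_ac trace_sub trace_scaleR matrix_mul_assoc
        matrix_add_ldistrib trace_add mm_neg trace_neg scalar_matrix_assoc[symmetric])
  moreover have sE: "sym_mat E" unfolding E_def by (intro sym_diff pos_def_sym pG pG')
  have pGi: "pos_def Gi" using pd_inv[OF pG] by (simp add: Gi_def)
  have pGpi: "pos_def Gpi" using pd_inv[OF pG'] by (simp add: Gpi_def)
  have "trace (E ** Gpi ** E ** Gi) \<ge> 0" by (rule trace_pos(1)[OF sE pGpi pGi])
  moreover have "trace (E ** Gpi ** E ** S) \<ge> 0" by (rule trace_pos(1)[OF sE pGpi pS])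
  moreover have "trace (E ** S' ** E ** Gi) \<ge> 0" by (rule trace_pos(1)[OF sE pS' pGi])
  ultimately have "trace (E ** D) \<le> 0" using a by (smt (verit) mult_nonneg_nonneg)
  then show ?thesis by (simp add: E_def D_def)
qed



lemma uniq_core:
  fixes S S' :: "real^'n^'n" and G G' Sm :: "nat \<Rightarrow> real^'n^'n"
  assumes a: "a > 0" and fI: "finite I" and lam: "\<forall>i\<in>I. lam i \<ge> 0"
    and pS: "pos_def S" and pS': "pos_def S'"
    and hG: "\<forall>i\<in>I. pos_def (G i) \<and> pos_def (G' i) \<and> G i ** S ** G i + a *\<^sub>R G i = Sm i
               \<and> G' i ** S' ** G' i + a *\<^sub>R G' i = Sm i"
    and h1: "(\<Sum>i\<in>I. lam i *\<^sub>R G i) + a *\<^sub>R matrix_inv S = mat 1"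
    and h2: "(\<Sum>i\<in>I. lam i *\<^sub>R G' i) + a *\<^sub>R matrix_inv S' = mat 1"
  shows "S = S'"
proof -
  define D where "D = S - S'"
  define Si where "Si = matrix_inv S"
  define Spi where "Spi = matrix_inv S'"
  have i1: "Si *v (S *v y) = y" for y
    using inv_props(2)[OF pos_def_invertible[OF pS]] by (simp add: Si_def matrix_vector_mul_assoc)
  have i2: "S' *v (Spi *v y) = y" for y
    using inv_props(1)[OF pos_def_invertible[OF pS']] by (simp add: Spi_def matrix_vector_mul_assoc)
  have "(\<Sum>i\<in>I. lam i *\<^sub>R (G i - G' i)) = (\<Sum>i\<in>I. lam i *\<^sub>R G i) - (\<Sum>i\<in>I. lam i *\<^sub>R G' i)"
    by (simp add: scaleR_diff_right sum_subtractf)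
  also have "\<dots> = a *\<^sub>R (Spi - Si)"
    using h1 h2 by (simp add: Si_def Spi_def algebra_simps eq_diff_eq)
  also have "Spi - Si = Si ** D ** Spi"
    by (simp add: matrix_eq D_def mvs i1 i2)
  finally have sumE: "(\<Sum>i\<in>I. lam i *\<^sub>R (G i - G' i)) = a *\<^sub>R (Si ** D ** Spi)" .
  have "trace ((\<Sum>i\<in>I. lam i *\<^sub>R (G i - G' i)) ** D) = (\<Sum>i\<in>I. lam i * trace ((G i - G' i) ** D))"
    by (simp add: mm_sum_left trace_sum trace_scaleR scalar_matrix_assoc[symmetric])
  also have "\<dots> \<le> 0"
  proof (rule sum_nonpos)
    fix i assume i: "i \<in> I"
    have "trace ((G i - G' i) ** D) \<le> 0"
      unfolding D_def using hG i by (intro trace_ED[OF a _ _ pS pS']) auto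
    then show "lam i * trace ((G i - G' i) ** D) \<le> 0"
      using lam i by (simp add: mult_nonneg_nonpos)
  qed
  finally have le: "trace ((\<Sum>i\<in>I. lam i *\<^sub>R (G i - G' i)) ** D) \<le> 0" .
  have "trace ((\<Sum>i\<in>I. lam i *\<^sub>R (G i - G' i)) ** D) = a * trace (Si ** (D ** Spi ** D))"
    unfolding sumE by (simp add: trace_scaleR scalar_matrix_assoc[symmetric] matrix_mul_assoc)
  also have "trace (Si ** (D ** Spi ** D)) = trace (D ** Spi ** D ** Si)"
    by (rule trace_mul_sym)
  finally have eqt: "trace ((\<Sum>i\<in>I. lam i *\<^sub>R (G i - G' i)) ** D) = a * trace (D ** Spi ** D ** Si)" .
  have sD: "sym_mat D" unfolding D_def by (intro sym_diff pos_def_sym pS pS')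
  have pSi: "pos_def Si" using pd_inv[OF pS] by (simp add: Si_def)
  have pSpi: "pos_def Spi" using pd_inv[OF pS'] by (simp add: Spi_def)
  have ge: "trace (D ** Spi ** D ** Si) \<ge> 0" by (rule trace_pos(1)[OF sD pSpi pSi])
  have "a * trace (D ** Spi ** D ** Si) \<le> 0" using le eqt by simp
  then have "trace (D ** Spi ** D ** Si) = 0" using ge a by (smt (verit) mult_pos_pos)
  then have "D = 0" by (rule trace_pos(2)[OF sD pSpi pSi])
  then show ?thesis by (simp add: D_def)
qed



lemma congr_pd:
  fixes T Q :: "real^'n^'n"
  assumes T: "sym_mat T" "invertible T" and Q: "pos_def Q"
  shows "pos_def (T ** Q ** T)"
  unfolding pos_def_def
proof (intro conjI allI impI)
  show "sym_mat (T ** Q ** T)" unfolding sym_mat_iff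
  proof (intro allI)
    fix x y :: "real^'n"
    have "x \<bullet> ((T ** Q ** T) *v y) = (T *v x) \<bullet> (Q *v (T *v y))"
      by (simp add: matrix_vector_mul_assoc[symmetric] sym_matD[OF T(1)])
    also have "\<dots> = (Q *v (T *v x)) \<bullet> (T *v y)" by (rule sym_matD[OF pos_def_sym[OF Q]])
    also have "\<dots> = ((T ** Q ** T) *v x) \<bullet> y"
      by (simp add: matrix_vector_mul_assoc[symmetric] sym_matD[OF T(1)] inner_commute)
    finally show "x \<bullet> ((T ** Q ** T) *v y) = ((T ** Q ** T) *v x) \<bullet> y" .
  qed
  fix x :: "real^'n" assume x: "x \<noteq> 0"
  have "T *v x \<noteq> 0" using inj_matrix_vector_mult[OF T(2)] x by (metis injD matrix_vector_mult_0_right)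
  then have "(T *v x) \<bullet> (Q *v (T *v x)) > 0" using Q by (simp add: pos_def_def)
  also have "(T *v x) \<bullet> (Q *v (T *v x)) = x \<bullet> ((T ** Q ** T) *v x)"
    by (simp add: matrix_vector_mul_assoc[symmetric] sym_matD[OF T(1)])
  finally show "x \<bullet> ((T ** Q ** T) *v x) > 0" .
qed

lemma M_pd:
  fixes S Sg :: "real^'n^'n"
  assumes pS: "pos_def S" and pSg: "pos_def Sg"
  shows "pos_def (mat_sqrt S ** Sg ** mat_sqrt S + (c^2) *\<^sub>R mat 1)"
proof -
  have pR: "pos_def (mat_sqrt S)" using mat_sqrt[OF pS] by simp
  have p1: "pos_def (mat_sqrt S ** Sg ** mat_sqrt S)"
    by (rule congr_pd[OF pos_def_sym[OF pR] pos_def_invertible[OF pR] pSg])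
  show ?thesis unfolding pos_def_def
  proof (intro conjI allI impI)
    show "sym_mat (mat_sqrt S ** Sg ** mat_sqrt S + c\<^sup>2 *\<^sub>R mat 1)"
      using pos_def_sym[OF p1] by (simp add: sym_mat_def transpose_def vec_eq_iff mat_def)
    fix x :: "real^'n" assume "x \<noteq> 0"
    then have "x \<bullet> ((mat_sqrt S ** Sg ** mat_sqrt S) *v x) > 0" using p1 by (simp add: pos_def_def)
    moreover have "c^2 * (x \<bullet> x) \<ge> 0" by simp
    moreover have "x \<bullet> ((mat_sqrt S ** Sg ** mat_sqrt S + c\<^sup>2 *\<^sub>R mat 1) *v x)
       = x \<bullet> ((mat_sqrt S ** Sg ** mat_sqrt S) *v x) + c^2 * (x \<bullet> x)"
      by (simp add: matrix_vector_mult_add_rdistrib inner_add_right scaleR_matrix_vector_assoc[symmetric])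
    ultimately show "x \<bullet> ((mat_sqrt S ** Sg ** mat_sqrt S + c\<^sup>2 *\<^sub>R mat 1) *v x) > 0"
      by linarith
  qed
qed

lemma P_gt:
  fixes S Sg :: "real^'n^'n"
  assumes pS: "pos_def S" and pSg: "pos_def Sg" and c: "c > 0" and x: "x \<noteq> 0"
  shows "x \<bullet> (mat_sqrt (mat_sqrt S ** Sg ** mat_sqrt S + (c^2) *\<^sub>R mat 1) *v x) > c * (x \<bullet> x)"
proof -
  define R where "R = mat_sqrt S"
  define M where "M = R ** Sg ** R + (c^2) *\<^sub>R mat 1"
  have pM: "pos_def M" using M_pd[OF pS pSg] by (simp add: M_def R_def)
  have pR: "pos_def R" using mat_sqrt[OF pS] by (simp add: R_def)
  have p1: "pos_def (R ** Sg ** R)"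
    by (rule congr_pd[OF pos_def_sym[OF pR] pos_def_invertible[OF pR] pSg])
  have "x \<bullet> (mat_sqrt M *v x) > c * (x \<bullet> x)"
  proof (rule sqrt_gt[OF mat_sqrt(1)[OF pM] c _ x])
    fix y :: "real^'n" assume "y \<noteq> 0"
    then have "y \<bullet> ((R ** Sg ** R) *v y) > 0" using p1 by (simp add: pos_def_def)
    moreover have "y \<bullet> ((mat_sqrt M ** mat_sqrt M) *v y) = y \<bullet> (M *v y)"
      using mat_sqrt(2)[OF pM] by simp
    moreover have "y \<bullet> (M *v y) = y \<bullet> ((R ** Sg ** R) *v y) + c^2 * (y \<bullet> y)"
      by (simp add: M_def matrix_vector_mult_add_rdistrib inner_add_right
          scaleR_matrix_vector_assoc[symmetric])
    ultimately show "y \<bullet> ((mat_sqrt M ** mat_sqrt M) *v y) > c\<^sup>2 * (y \<bullet> y)"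
      by linarith
  qed
  then show ?thesis by (simp add: M_def R_def)
qed

lemma vec_two: "(2::real^'n) * v = (2::real) *\<^sub>R v"
  by (simp add: vec_eq_iff)

lemma quad_id:
  fixes p1 p2 u :: "'a::real_vector"
  shows "(p2 - c *\<^sub>R p1 - c *\<^sub>R (p1 - c *\<^sub>R u)) + (2*c) *\<^sub>R (p1 - c *\<^sub>R u) = p2 - (c*c) *\<^sub>R u"
proof -
  have "(2*c) *\<^sub>R (p1 - c *\<^sub>R u) = c *\<^sub>R (p1 - c *\<^sub>R u) + c *\<^sub>R (p1 - c *\<^sub>R u)"
    by (metis mult_2 scaleR_add_left)
  then show ?thesis by (simp add: algebra_simps)
qed

lemma bridge:
  fixes S Sg :: "real^'n^'n"
  assumes pS: "pos_def S" and pSg: "pos_def Sg" and c: "c > 0"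
  defines "R \<equiv> mat_sqrt S"
  defines "P \<equiv> mat_sqrt (R ** Sg ** R + (c^2) *\<^sub>R mat 1)"
  defines "G \<equiv> matrix_inv R ** P ** matrix_inv R - c *\<^sub>R matrix_inv S"
  shows "pos_def G" "G ** S ** G + (2*c) *\<^sub>R G = Sg"
proof -
  define Ri where "Ri = matrix_inv R"
  define M where "M = R ** Sg ** R + (c^2) *\<^sub>R mat 1"
  have pR: "pos_def R" "R ** R = S" using mat_sqrt[OF pS] by (auto simp: R_def)
  have pM: "pos_def M" using M_pd[OF pS pSg] by (simp add: M_def R_def)
  have pP: "pos_def P" "P ** P = M" using mat_sqrt[OF pM] by (auto simp: P_def M_def)
  have iR: "invertible R" by (rule pos_def_invertible[OF pR(1)])
  have r1: "R *v (Ri *v y) = y" for y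
    using inv_props(1)[OF iR] by (simp add: Ri_def matrix_vector_mul_assoc)
  have r2: "Ri *v (R *v y) = y" for y
    using inv_props(2)[OF iR] by (simp add: Ri_def matrix_vector_mul_assoc)
  have Si: "matrix_inv S = Ri ** Ri"
  proof -
    have iS: "invertible S" by (rule pos_def_invertible[OF pS])
    have "(Ri ** Ri) ** S = mat 1"
      by (simp add: matrix_eq pR(2)[symmetric] mvs r2)
    then have "(Ri ** Ri) ** S ** matrix_inv S = matrix_inv S" by simp
    then show ?thesis using inv_props(1)[OF iS] by (simp add: matrix_mul_assoc[symmetric])
  qed
  have Geq: "G = Ri ** (P - c *\<^sub>R mat 1) ** Ri"
    by (simp add: G_def Ri_def[symmetric] Si matrix_eq mvs)
  have pPc: "pos_def (P - c *\<^sub>R mat 1)" unfolding pos_def_def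
  proof (intro conjI allI impI)
    show "sym_mat (P - c *\<^sub>R mat 1)"
      using pos_def_sym[OF pP(1)] by (simp add: sym_mat_def transpose_def vec_eq_iff mat_def)
    fix x :: "real^'n" assume x: "x \<noteq> 0"
    have "x \<bullet> (P *v x) > c * (x \<bullet> x)" using P_gt[OF pS pSg c x] by (simp add: P_def R_def)
    then show "x \<bullet> ((P - c *\<^sub>R mat 1) *v x) > 0"
      by (simp add: mvs inner_diff_right)
  qed
  have pRi: "pos_def Ri" using pd_inv[OF pR(1)] by (simp add: Ri_def)
  show "pos_def G" unfolding Geq
    by (rule congr_pd[OF pos_def_sym[OF pRi] pos_def_invertible[OF pRi] pPc])
  have PP: "P *v (P *v y) = R *v (Sg *v (R *v y)) + (c^2) *\<^sub>R y" for y
  proof -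
    have "P *v (P *v y) = M *v y" by (simp add: matrix_vector_mul_assoc pP(2))
    then show ?thesis by (simp add: M_def mvs)
  qed
  have "(G ** S ** G + (2*c) *\<^sub>R G) *v x = Sg *v x" for x
  proof -
    define u where "u = Ri *v x"
    define Q where "Q = P - c *\<^sub>R mat 1"
    have Qy: "Q *v y = P *v y - c *\<^sub>R y" for y by (simp add: Q_def mvs)
    have "(G ** S ** G + (2*c) *\<^sub>R G) *v x = Ri *v (Q *v (Ri *v (R *v (R *v (Ri *v (Q *v u))))))
            + (2*c) *\<^sub>R (Ri *v (Q *v u))"
      unfolding Geq pR(2)[symmetric] Q_def[symmetric] u_def
      by (simp only: mvs)
    also have "\<dots> = Ri *v (Q *v (Q *v u) + (2*c) *\<^sub>R (Q *v u))"
      by (simp add: r1 r2 mvs)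
    also have "Q *v (Q *v u) + (2*c) *\<^sub>R (Q *v u) = P *v (P *v u) - (c*c) *\<^sub>R u"
    proof -
      show ?thesis using quad_id[of "P *v (P *v u)" c "P *v u" u]
        by (simp add: Qy mvs)
    qed
    also have "P *v (P *v u) - (c*c) *\<^sub>R u = R *v (Sg *v (R *v u))"
      by (simp add: PP power2_eq_square)
    finally show ?thesis by (simp add: u_def r1 r2)
  qed
  then show "G ** S ** G + (2*c) *\<^sub>R G = Sg" by (simp add: matrix_eq)
qed



lemma mm_cont[continuous_intros]:
  fixes f g :: "'a::topological_space \<Rightarrow> real^'n^'n"
  assumes "continuous_on K f" "continuous_on K g"
  shows "continuous_on K (\<lambda>S. f S ** g S)"
  unfolding matrix_matrix_mult_def by (intro continuous_intros assms)

lemma quadform_cont: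
  "continuous_on K (\<lambda>S::real^'n^'n. x \<bullet> (S *v x))"
  unfolding matrix_vector_mult_def by (intro continuous_intros)

lemma transpose_cont:
  "continuous_on K (\<lambda>S::real^'n^'n. transpose S)"
  unfolding transpose_def by (intro continuous_intros)

lemma closed_K:
  "closed {S::real^'n^'n. sym_mat S \<and> (\<forall>x. al * (x \<bullet> x) \<le> x \<bullet> (S *v x)) \<and> (\<forall>x. x \<bullet> (S *v x) \<le> be * (x \<bullet> x))}"
proof -
  have "{S::real^'n^'n. sym_mat S \<and> (\<forall>x. al * (x \<bullet> x) \<le> x \<bullet> (S *v x)) \<and> (\<forall>x. x \<bullet> (S *v x) \<le> be * (x \<bullet> x))}
    = {S. transpose S = S} \<inter> (\<Inter>x. {S. al * (x \<bullet> x) \<le> x \<bullet> (S *v x)}) \<inter> (\<Inter>x. {S. x \<bullet> (S *v x) \<le> be * (x \<bullet> x)})"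
    by (auto simp: sym_mat_def)
  moreover have "closed {S::real^'n^'n. transpose S = S}"
    using closed_Collect_eq[OF transpose_cont continuous_on_id] by simp
  moreover have "closed {S::real^'n^'n. al * (x \<bullet> x) \<le> x \<bullet> (S *v x)}" for x
    by (rule closed_Collect_le[OF continuous_on_const quadform_cont, simplified])
  moreover have "closed {S::real^'n^'n. x \<bullet> (S *v x) \<le> be * (x \<bullet> x)}" for x
    by (rule closed_Collect_le[OF quadform_cont continuous_on_const, simplified])
  ultimately show ?thesis by (simp add: closed_Int closed_INT)
qed

lemma psd_offdiag:
  fixes S :: "real^'n^'n"
  assumes "sym_mat S" "\<forall>x. 0 \<le> x \<bullet> (S *v x)"
  shows "2 * \<bar>x \<bullet> (S *v y)\<bar> \<le> x \<bullet> (S *v x) + y \<bullet> (S *v y)"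
proof -
  have s: "y \<bullet> (S *v x) = x \<bullet> (S *v y)" using sym_matD[OF assms(1)] by (simp add: inner_commute)
  have "0 \<le> (x + y) \<bullet> (S *v (x + y))" "0 \<le> (x - y) \<bullet> (S *v (x - y))" using assms(2) by auto
  then show ?thesis using s
    by (simp add: matrix_vector_right_distrib matrix_vector_mult_diff_distrib inner_add_left
        inner_add_right inner_diff_left inner_diff_right abs_le_iff)
qed

lemma bounded_K:
  assumes al: "al \<ge> 0"
  shows "bounded {S::real^'n^'n. sym_mat S \<and> (\<forall>x. al * (x \<bullet> x) \<le> x \<bullet> (S *v x)) \<and> (\<forall>x. x \<bullet> (S *v x) \<le> be * (x \<bullet> x))}"
  unfolding bounded_iff
proof (intro exI ballI)
  fix S :: "real^'n^'n"
  assume "S \<in> {S::real^'n^'n. sym_mat S \<and> (\<forall>x. al * (x \<bullet> x) \<le> x \<bullet> (S *v x)) \<and> (\<forall>x. x \<bullet> (S *v x) \<le> be * (x \<bullet> x))}"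
  then have sS: "sym_mat S" and lo: "\<forall>x. al * (x \<bullet> x) \<le> x \<bullet> (S *v x)"
    and up: "\<forall>x. x \<bullet> (S *v x) \<le> be * (x \<bullet> x)" by auto
  have psd: "\<forall>x. 0 \<le> x \<bullet> (S *v x)" using lo al by (metis inner_ge_zero mult_nonneg_nonneg order_trans)
  have diag: "axis i 1 \<bullet> (S *v axis i 1) \<le> be" for i :: 'n
  proof -
    have "axis i 1 \<bullet> (S *v axis i 1) \<le> be * (axis i 1 \<bullet> axis i (1::real))" using up by blast
    then show ?thesis by (simp add: inner_axis_axis)
  qed
  have ent: "\<bar>S $ i $ j\<bar> \<le> be" for i j
  proof -
    have e: "S $ i $ j = axis i 1 \<bullet> (S *v axis j 1)"
      by (simp add: matrix_vector_mult_basis column_def inner_axis')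
    have "2 * \<bar>S $ i $ j\<bar> \<le> axis i 1 \<bullet> (S *v axis i 1) + axis j 1 \<bullet> (S *v axis j 1)"
      unfolding e by (rule psd_offdiag[OF sS psd])
    also have "\<dots> \<le> be + be"
      using diag[of i] diag[of j] by linarith
    finally show ?thesis by simp
  qed
  have "norm S \<le> (\<Sum>i\<in>UNIV. norm (S $ i))" by (simp add: norm_vec_def L2_set_le_sum)
  also have "\<dots> \<le> (\<Sum>i\<in>(UNIV::'n set). \<Sum>j\<in>(UNIV::'n set). \<bar>S $ i $ j\<bar>)"
    by (rule sum_mono) (rule norm_le_l1_cart)
  also have "\<dots> \<le> (\<Sum>i\<in>(UNIV::'n set). \<Sum>j\<in>(UNIV::'n set). be)"
    by (intro sum_mono ent)
  finally show "norm S \<le> real CARD('n) * (real CARD('n) * be)" by simp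
qed



lemma sum_mv: "(\<Sum>i\<in>I. (f i :: real^'n^'m)) *v x = (\<Sum>i\<in>I. f i *v x)"
  by (induction I rule: infinite_finite_induct) (simp_all add: matrix_vector_mult_add_rdistrib)

lemma sym_add: "sym_mat (A::real^'n^'n) \<Longrightarrow> sym_mat B \<Longrightarrow> sym_mat (A + B)"
  by (simp add: sym_mat_def transpose_def vec_eq_iff)
lemma sym_scale: "sym_mat (A::real^'n^'n) \<Longrightarrow> sym_mat (r *\<^sub>R A)"
  by (simp add: sym_mat_def transpose_scalar)
lemma sym_mat_const: "sym_mat (mat r :: real^'n^'n)"
  by (simp add: sym_mat_def)
lemma sym_sum: "(\<And>i. i \<in> I \<Longrightarrow> sym_mat (f i :: real^'n^'n)) \<Longrightarrow> sym_mat (\<Sum>i\<in>I. f i)"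
proof (induction I rule: infinite_finite_induct)
  case (infinite A) then show ?case by (simp add: sym_mat_def transpose_def vec_eq_iff)
next
  case empty then show ?case by (simp add: sym_mat_def transpose_def vec_eq_iff)
next
  case (insert x F) then show ?case by (simp add: sym_add)
qed

lemma sig_bound:
  fixes Sg :: "real^'n^'n"
  shows "y \<bullet> (Sg *v y) \<le> (\<Sum>a\<in>UNIV. \<Sum>b\<in>UNIV. \<bar>Sg $ a $ b\<bar>) * (y \<bullet> y)"
proof -
  define t where "t = (\<Sum>a\<in>UNIV. \<Sum>b\<in>UNIV. \<bar>Sg $ a $ b\<bar>)"
  have h1: "y \<bullet> (Sg *v y) \<le> norm y * norm (Sg *v y)" by (rule norm_cauchy_schwarz)
  have h2: "norm (Sg *v y) \<le> onorm ((*v) Sg) * norm y"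
    by (rule onorm[OF matrix_vector_mul_bounded_linear])
  have h3: "onorm ((*v) Sg) \<le> t" unfolding t_def
    by (rule onorm_le_matrix_component_sum)
  have "norm (Sg *v y) \<le> t * norm y" using h2 h3 by (meson mult_right_mono norm_ge_zero order_trans)
  then have "norm y * norm (Sg *v y) \<le> norm y * (t * norm y)" by (simp add: mult_left_mono)
  also have "\<dots> = t * (y \<bullet> y)" by (simp add: power2_norm_eq_inner[symmetric] power2_eq_square)
  finally show ?thesis using h1 by (simp add: t_def)
qed

lemma P_le:
  fixes S Sg :: "real^'n^'n"
  assumes pS: "pos_def S" and pSg: "pos_def Sg" and s: "s \<ge> 0" and be: "be \<ge> 0"
    and upS: "\<forall>x. x \<bullet> (S *v x) \<le> be * (x \<bullet> x)" and upSg: "\<forall>y. y \<bullet> (Sg *v y) \<le> s * (y \<bullet> y)"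
  shows "x \<bullet> (mat_sqrt (mat_sqrt S ** Sg ** mat_sqrt S + (c^2) *\<^sub>R mat 1) *v x)
           \<le> sqrt (s * be + c^2) * (x \<bullet> x)"
proof -
  define R where "R = mat_sqrt S"
  define M where "M = R ** Sg ** R + (c^2) *\<^sub>R mat 1"
  define P where "P = mat_sqrt M"
  have pR: "pos_def R" "R ** R = S" using mat_sqrt[OF pS] by (auto simp: R_def)
  have pM: "pos_def M" using M_pd[OF pS pSg] by (simp add: M_def R_def)
  have pP: "pos_def P" "P ** P = M" using mat_sqrt[OF pM] by (auto simp: P_def)
  have "(P *v x) \<bullet> (P *v x) = x \<bullet> (P *v (P *v x))"
    using sym_matD[OF pos_def_sym[OF pP(1)]] by simp
  also have "\<dots> = x \<bullet> (M *v x)" by (simp add: matrix_vector_mul_assoc pP(2))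
  also have "\<dots> = (R *v x) \<bullet> (Sg *v (R *v x)) + c^2 * (x \<bullet> x)"
    using sym_matD[OF pos_def_sym[OF pR(1)]]
    by (simp add: M_def mvs inner_add_right)
  also have "\<dots> \<le> s * ((R *v x) \<bullet> (R *v x)) + c^2 * (x \<bullet> x)"
    using upSg by simp
  also have "(R *v x) \<bullet> (R *v x) = x \<bullet> (S *v x)"
    using sym_matD[OF pos_def_sym[OF pR(1)]] by (simp add: pR(2)[symmetric] matrix_vector_mul_assoc[symmetric])
  also have "s * (x \<bullet> (S *v x)) \<le> s * (be * (x \<bullet> x))"
    using upS s by (simp add: mult_left_mono)
  finally have sq: "(P *v x) \<bullet> (P *v x) \<le> (s * be + c^2) * (x \<bullet> x)" by (simp add: algebra_simps)
  have "norm (P *v x) \<le> sqrt (s * be + c^2) * norm x"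
  proof -
    have "norm (P *v x) = sqrt ((P *v x) \<bullet> (P *v x))" by (simp add: norm_eq_sqrt_inner)
    also have "\<dots> \<le> sqrt ((s * be + c^2) * (x \<bullet> x))" using sq by (rule real_sqrt_le_mono)
    also have "\<dots> = sqrt (s * be + c^2) * norm x" by (simp add: real_sqrt_mult norm_eq_sqrt_inner)
    finally show ?thesis .
  qed
  then have "x \<bullet> (P *v x) \<le> norm x * (sqrt (s * be + c^2) * norm x)"
    using norm_cauchy_schwarz[of x "P *v x"] by (smt (verit) mult_left_mono norm_ge_zero)
  also have "\<dots> = sqrt (s * be + c^2) * (x \<bullet> x)"
    by (simp add: power2_norm_eq_inner[symmetric] power2_eq_square)
  finally show ?thesis by (simp add: P_def M_def R_def)
qed

lemma P_ge:
  fixes S Sg :: "real^'n^'n"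
  assumes pS: "pos_def S" and pSg: "pos_def Sg" and c: "c > 0"
  shows "c * (x \<bullet> x) \<le> x \<bullet> (mat_sqrt (mat_sqrt S ** Sg ** mat_sqrt S + (c^2) *\<^sub>R mat 1) *v x)"
  using P_gt[OF pS pSg c, of x] by (cases "x = 0") auto



lemma existence:
  fixes Sig :: "nat \<Rightarrow> real^'n^'n"
  assumes c: "c > 0" and fI: "finite I" and lam: "\<forall>i\<in>I. lam i \<ge> 0" and sl: "sum lam I = 1"
    and pSig: "\<forall>i\<in>I. pos_def (Sig i)"
  shows "\<exists>S. pos_def S \<and>
    c *\<^sub>R mat 1 + (\<Sum>i\<in>I. lam i *\<^sub>R mat_sqrt (mat_sqrt S ** Sig i ** mat_sqrt S + (c^2) *\<^sub>R mat 1)) = S"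
proof -
  define s where "s = (\<Sum>i\<in>I. \<Sum>a\<in>UNIV. \<Sum>b\<in>UNIV. \<bar>Sig i $ a $ b\<bar>)"
  have s0: "s \<ge> 0" unfolding s_def by (intro sum_nonneg) auto
  have sigb: "y \<bullet> (Sig i *v y) \<le> s * (y \<bullet> y)" if "i \<in> I" for i y
  proof -
    have "(\<Sum>a\<in>UNIV. \<Sum>b\<in>UNIV. \<bar>Sig i $ a $ b\<bar>) \<le> s"
      unfolding s_def
      by (rule member_le_sum[where f = "\<lambda>i. \<Sum>a\<in>UNIV. \<Sum>b\<in>UNIV. \<bar>Sig i $ a $ b\<bar>", OF that _ fI])
         (auto intro: sum_nonneg)
    then have "(\<Sum>a\<in>UNIV. \<Sum>b\<in>UNIV. \<bar>Sig i $ a $ b\<bar>) * (y \<bullet> y) \<le> s * (y \<bullet> y)"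
      by (rule mult_right_mono) simp
    then show ?thesis using sig_bound[of y "Sig i"] by linarith
  qed
  define al where "al = 2 * c"
  define be where "be = 2 * c + s"
  have be0: "be \<ge> 0" using c s0 by (simp add: be_def)
  define K where "K = {S::real^'n^'n. sym_mat S \<and> (\<forall>x. al * (x \<bullet> x) \<le> x \<bullet> (S *v x)) \<and> (\<forall>x. x \<bullet> (S *v x) \<le> be * (x \<bullet> x))}"
  have pdK: "pos_def S" if "S \<in> K" for S
    unfolding pos_def_def
  proof (intro conjI allI impI)
    show "sym_mat S" using that by (simp add: K_def)
    fix x :: "real^'n" assume "x \<noteq> 0"
    then have "al * (x \<bullet> x) > 0" using c by (simp add: al_def)
    moreover have "al * (x \<bullet> x) \<le> x \<bullet> (S *v x)" using that unfolding K_def by blast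
    ultimately show "x \<bullet> (S *v x) > 0" by linarith
  qed
  define h where "h i S = mat_sqrt S ** Sig i ** mat_sqrt S + (c^2) *\<^sub>R mat 1" for i S
  define \<Phi> where "\<Phi> S = c *\<^sub>R mat 1 + (\<Sum>i\<in>I. lam i *\<^sub>R mat_sqrt (h i S))" for S
  have al0: "al \<ge> 0" using c by (simp add: al_def)
  have cK: "compact K" unfolding K_def compact_eq_bounded_closed
    by (intro conjI bounded_K[OF al0] closed_K)
  have cvK: "convex K" unfolding convex_def
  proof (intro ballI allI impI)
    fix A B :: "real^'n^'n" and u v :: real
    assume A: "A \<in> K" and B: "B \<in> K" and uv: "0 \<le> u" "0 \<le> v" "u + v = 1"
    have q: "x \<bullet> ((u *\<^sub>R A + v *\<^sub>R B) *v x) = u * (x \<bullet> (A *v x)) + v * (x \<bullet> (B *v x))" for x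
      by (simp add: mvs inner_add_right)
    have "sym_mat (u *\<^sub>R A + v *\<^sub>R B)" using A B by (intro sym_add sym_scale) (auto simp: K_def)
    moreover have "al * (x \<bullet> x) \<le> x \<bullet> ((u *\<^sub>R A + v *\<^sub>R B) *v x)" for x
    proof -
      have "u * (al * (x \<bullet> x)) \<le> u * (x \<bullet> (A *v x))" "v * (al * (x \<bullet> x)) \<le> v * (x \<bullet> (B *v x))"
        using A B uv by (auto simp: K_def intro!: mult_left_mono)
      moreover have "al * (x \<bullet> x) = u * (al * (x \<bullet> x)) + v * (al * (x \<bullet> x))"
        using uv(3) by (metis distrib_right mult_1)
      ultimately show ?thesis unfolding q by linarith
    qed
    moreover have "x \<bullet> ((u *\<^sub>R A + v *\<^sub>R B) *v x) \<le> be * (x \<bullet> x)" for x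
    proof -
      have "u * (x \<bullet> (A *v x)) \<le> u * (be * (x \<bullet> x))" "v * (x \<bullet> (B *v x)) \<le> v * (be * (x \<bullet> x))"
        using A B uv by (auto simp: K_def intro!: mult_left_mono)
      moreover have "be * (x \<bullet> x) = u * (be * (x \<bullet> x)) + v * (be * (x \<bullet> x))"
        using uv(3) by (metis distrib_right mult_1)
      ultimately show ?thesis unfolding q by linarith
    qed
    ultimately show "u *\<^sub>R A + v *\<^sub>R B \<in> K" by (simp add: K_def)
  qed
  have neK: "K \<noteq> {}"
  proof -
    have "al *\<^sub>R mat 1 \<in> K" using c s0
      by (simp add: K_def sym_scale sym_mat_const scaleR_matrix_vector_assoc[symmetric] al_def be_def
          mult_right_mono)
    then show ?thesis by blast
  qed
  have contK: "continuous_on K \<Phi>"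
  proof -
    have cs: "continuous_on K mat_sqrt"
      using continuous_on_subset[OF mat_sqrt_continuous] pdK by blast
    have ch: "continuous_on K (h i)" for i
      unfolding h_def by (intro continuous_intros cs)
    have hpd: "h i ` K \<subseteq> {A. pos_def A}" if "i \<in> I" for i
    proof
      fix A assume "A \<in> h i ` K"
      then obtain S where "S \<in> K" "A = h i S" by blast
      moreover have "pos_def (Sig i)" using pSig that by blast
      ultimately show "A \<in> {A. pos_def A}" using M_pd[OF pdK] by (simp add: h_def)
    qed
    have "continuous_on K (\<lambda>S. mat_sqrt (h i S))" if "i \<in> I" for i
      by (rule continuous_on_compose2[OF mat_sqrt_continuous ch hpd[OF that]])
    then show ?thesis unfolding \<Phi>_def by (intro continuous_intros) auto
  qed
  have mapK: "\<Phi> \<in> K \<rightarrow> K"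
  proof
    fix S assume SK: "S \<in> K"
    have pS: "pos_def S" by (rule pdK[OF SK])
    have upS: "\<forall>x. x \<bullet> (S *v x) \<le> be * (x \<bullet> x)" using SK by (simp add: K_def)
    have q: "x \<bullet> (\<Phi> S *v x) = c * (x \<bullet> x) + (\<Sum>i\<in>I. lam i * (x \<bullet> (mat_sqrt (h i S) *v x)))" for x
      by (simp add: \<Phi>_def mvs sum_mv inner_add_right inner_sum_right)
    have "sym_mat (\<Phi> S)" unfolding \<Phi>_def
      using pSig M_pd[OF pS] mat_sqrt(1)
      by (intro sym_add sym_scale sym_mat_const sym_sum pos_def_sym) (auto simp: h_def)
    moreover have "al * (x \<bullet> x) \<le> x \<bullet> (\<Phi> S *v x)" for x
    proof -
      have "(\<Sum>i\<in>I. lam i * (c * (x \<bullet> x))) \<le> (\<Sum>i\<in>I. lam i * (x \<bullet> (mat_sqrt (h i S) *v x)))"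
        using P_ge[OF pS _ c] pSig lam by (intro sum_mono mult_left_mono) (auto simp: h_def)
      moreover have "(\<Sum>i\<in>I. lam i * (c * (x \<bullet> x))) = c * (x \<bullet> x)"
        using sl by (simp add: sum_distrib_right[symmetric])
      ultimately show ?thesis unfolding q al_def by linarith
    qed
    moreover have "x \<bullet> (\<Phi> S *v x) \<le> be * (x \<bullet> x)" for x
    proof -
      have "(\<Sum>i\<in>I. lam i * (x \<bullet> (mat_sqrt (h i S) *v x))) \<le> (\<Sum>i\<in>I. lam i * (sqrt (s * be + c^2) * (x \<bullet> x)))"
        using P_le[OF pS _ s0 be0 upS] pSig lam sigb by (intro sum_mono mult_left_mono) (auto simp: h_def)
      moreover have "(\<Sum>i\<in>I. lam i * (sqrt (s * be + c^2) * (x \<bullet> x))) = sqrt (s * be + c^2) * (x \<bullet> x)"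
        using sl by (simp add: sum_distrib_right[symmetric])
      moreover have "sqrt (s * be + c^2) = c + s"
      proof -
        have "s * be + c^2 = (c + s)^2" by (simp add: be_def power2_eq_square algebra_simps)
        then show ?thesis using c s0 by simp
      qed
      ultimately show ?thesis unfolding q be_def by (simp add: algebra_simps)
    qed
    ultimately show "\<Phi> S \<in> K" by (simp add: K_def)
  qed
  obtain S where SK: "S \<in> K" and fixp: "\<Phi> S = S"
    using brouwer[OF cK cvK neK contK mapK] by blast
  show ?thesis using pdK[OF SK] fixp by (auto simp: \<Phi>_def h_def)
qed



lemma inv_sqrt:
  fixes S :: "real^'n^'n"
  assumes pS: "pos_def S"
  shows "matrix_inv S = matrix_inv (mat_sqrt S) ** matrix_inv (mat_sqrt S)"
proof -
  define R where "R = mat_sqrt S"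
  define Ri where "Ri = matrix_inv R"
  have pR: "pos_def R" "R ** R = S" using mat_sqrt[OF pS] by (auto simp: R_def)
  have iR: "invertible R" by (rule pos_def_invertible[OF pR(1)])
  have r2: "Ri *v (R *v y) = y" for y
    using inv_props(2)[OF iR] by (simp add: Ri_def matrix_vector_mul_assoc)
  have iS: "invertible S" by (rule pos_def_invertible[OF pS])
  have "(Ri ** Ri) ** S = mat 1"
    by (simp add: matrix_eq pR(2)[symmetric] mvs r2)
  then have "(Ri ** Ri) ** S ** matrix_inv S = matrix_inv S" by simp
  then show ?thesis using inv_props(1)[OF iS] by (simp add: matrix_mul_assoc[symmetric] Ri_def R_def)
qed

lemma twoc_id:
  fixes a b :: "'a::real_vector"
  shows "(a - c *\<^sub>R b) + (2*c) *\<^sub>R b = a + c *\<^sub>R b"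
proof -
  have "(2*c) *\<^sub>R b = c *\<^sub>R b + c *\<^sub>R b" by (metis mult_2 scaleR_add_left)
  then show ?thesis by (simp add: algebra_simps)
qed

lemma eq_from_fix:
  fixes S :: "real^'n^'n" and P :: "nat \<Rightarrow> real^'n^'n"
  assumes pS: "pos_def S" and sl: "sum lam I = 1"
    and fixp: "c *\<^sub>R mat 1 + (\<Sum>i\<in>I. lam i *\<^sub>R P i) = S"
  shows "(\<Sum>i\<in>I. lam i *\<^sub>R (matrix_inv (mat_sqrt S) ** P i ** matrix_inv (mat_sqrt S)
            + c *\<^sub>R matrix_inv S)) = mat 1"
proof -
  define R where "R = mat_sqrt S"
  define Ri where "Ri = matrix_inv R"
  have pR: "pos_def R" "R ** R = S" using mat_sqrt[OF pS] by (auto simp: R_def)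
  have iR: "invertible R" by (rule pos_def_invertible[OF pR(1)])
  have r1: "R *v (Ri *v y) = y" for y
    using inv_props(1)[OF iR] by (simp add: Ri_def matrix_vector_mul_assoc)
  have Si: "matrix_inv S = Ri ** Ri" using inv_sqrt[OF pS] by (simp add: Ri_def R_def)
  have Sy: "(\<Sum>i\<in>I. lam i *\<^sub>R (P i *v y)) = S *v y - c *\<^sub>R y" for y
  proof -
    have "S *v y = c *\<^sub>R y + (\<Sum>i\<in>I. lam i *\<^sub>R (P i *v y))"
      by (simp add: fixp[symmetric] mvs sum_mv)
    then show ?thesis by simp
  qed
  show ?thesis
  proof (subst matrix_eq, intro allI)
    fix x
    have "(\<Sum>i\<in>I. lam i *\<^sub>R (Ri ** P i ** Ri + c *\<^sub>R matrix_inv S)) *v x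
        = (\<Sum>i\<in>I. lam i *\<^sub>R (Ri *v (P i *v (Ri *v x)))) + (\<Sum>i\<in>I. lam i) *\<^sub>R (c *\<^sub>R (Ri *v (Ri *v x)))"
    proof -
      have h: "(\<Sum>i\<in>I. (lam i * c) *\<^sub>R v) = (sum lam I * c) *\<^sub>R v" for v :: "real^'n"
        by (simp add: scaleR_sum_left sum_distrib_right)
      show ?thesis by (simp add: sum_mv mvs Si scaleR_add_right sum.distrib h)
    qed
    also have "(\<Sum>i\<in>I. lam i *\<^sub>R (Ri *v (P i *v (Ri *v x)))) = Ri *v (\<Sum>i\<in>I. lam i *\<^sub>R (P i *v (Ri *v x)))"
      by (simp add: mv_sum mvs)
    also have "\<dots> = Ri *v (S *v (Ri *v x)) - c *\<^sub>R (Ri *v (Ri *v x))"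
      by (simp add: Sy mvs)
    also have "Ri *v (S *v (Ri *v x)) = x"
    proof -
      have r2: "Ri *v (R *v y) = y" for y
        using inv_props(2)[OF iR] by (simp add: Ri_def matrix_vector_mul_assoc)
      show ?thesis by (simp add: pR(2)[symmetric] mvs r1 r2)
    qed
    finally show "(\<Sum>i\<in>I. lam i *\<^sub>R (matrix_inv (mat_sqrt S) ** P i ** matrix_inv (mat_sqrt S)
            + c *\<^sub>R matrix_inv S)) *v x = mat 1 *v x"
      using sl by (simp add: Ri_def R_def)
  qed
qed

lemma G_sum:
  fixes S :: "real^'n^'n" and P G :: "nat \<Rightarrow> real^'n^'n"
  assumes sl: "sum lam I = 1"
    and Gdef: "\<And>i. G i = matrix_inv (mat_sqrt S) ** P i ** matrix_inv (mat_sqrt S) - c *\<^sub>R matrix_inv S"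
    and eq: "(\<Sum>i\<in>I. lam i *\<^sub>R (matrix_inv (mat_sqrt S) ** P i ** matrix_inv (mat_sqrt S)
            + c *\<^sub>R matrix_inv S)) = mat 1"
  shows "(\<Sum>i\<in>I. lam i *\<^sub>R G i) + (2*c) *\<^sub>R matrix_inv S = mat 1"
proof -
  have "(\<Sum>i\<in>I. lam i *\<^sub>R (matrix_inv (mat_sqrt S) ** P i ** matrix_inv (mat_sqrt S)
            + c *\<^sub>R matrix_inv S)) = (\<Sum>i\<in>I. lam i *\<^sub>R (G i + (2*c) *\<^sub>R matrix_inv S))"
    by (simp add: Gdef twoc_id)
  also have "\<dots> = (\<Sum>i\<in>I. lam i *\<^sub>R G i) + (\<Sum>i\<in>I. lam i) *\<^sub>R ((2*c) *\<^sub>R matrix_inv S)"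
  proof -
    have h: "(\<Sum>i\<in>I. (lam i * (2*c)) *\<^sub>R v) = (sum lam I * (2*c)) *\<^sub>R v" for v :: "real^'n^'n"
      by (simp add: scaleR_sum_left sum_distrib_right)
    show ?thesis by (simp add: scaleR_add_right sum.distrib h)
  qed
  finally show ?thesis using eq sl by simp
qed

theorem proposition2:
  fixes \<epsilon> :: real and k :: nat
    and Sig :: "nat \<Rightarrow> real^'d^'d" and lam :: "nat \<Rightarrow> real"
  assumes "\<epsilon> > 0"
    and "\<forall>i\<in>{1..k}. pos_def (Sig i)"
    and "\<forall>i\<in>{1..k}. lam i > 0"
    and "(\<Sum>i=1..k. lam i) = 1"
  shows "\<exists>!S :: real^'d^'d. pos_def S \<and>
    (\<Sum>i=1..k. lam i *\<^sub>R
       (matrix_inv (mat_sqrt S) **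
          mat_sqrt (mat_sqrt S ** Sig i ** mat_sqrt S + ((\<epsilon>/4)^2) *\<^sub>R mat 1) **
          matrix_inv (mat_sqrt S)
        + (\<epsilon>/4) *\<^sub>R matrix_inv S)) = mat 1"
proof -
  define c where "c = \<epsilon>/4"
  have c: "c > 0" using assms(1) by (simp add: c_def)
  have fI: "finite {1..k}" by simp
  have lam0: "\<forall>i\<in>{1..k}. lam i \<ge> 0" using assms(3) by (simp add: less_imp_le)
  define P where "P S i = mat_sqrt (mat_sqrt S ** Sig i ** mat_sqrt S + (c^2) *\<^sub>R mat 1)"
    for S :: "real^'d^'d" and i
  define F where "F S = (\<Sum>i\<in>{1..k}. lam i *\<^sub>R (matrix_inv (mat_sqrt S) ** P S i ** matrix_inv (mat_sqrt S)
            + c *\<^sub>R matrix_inv S))" for S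
  define G where "G S i = matrix_inv (mat_sqrt S) ** P S i ** matrix_inv (mat_sqrt S) - c *\<^sub>R matrix_inv S"
    for S :: "real^'d^'d" and i
  have main: "\<exists>!S :: real^'d^'d. pos_def S \<and> F S = mat 1"
  proof -
    obtain S0 :: "real^'d^'d" where pS0: "pos_def S0"
      and fix0: "c *\<^sub>R mat 1 + (\<Sum>i\<in>{1..k}. lam i *\<^sub>R P S0 i) = S0"
      using existence[OF c fI lam0 assms(4) assms(2)] by (auto simp: P_def)
    have F0: "F S0 = mat 1" unfolding F_def by (rule eq_from_fix[OF pS0 assms(4) fix0])
    have Gprops: "pos_def (G S i) \<and> G S i ** S ** G S i + (2*c) *\<^sub>R G S i = Sig i"
      if "pos_def S" "i \<in> {1..k}" for S i
      using bridge[OF that(1) _ c, of "Sig i"] assms(2) that(2) by (simp add: G_def P_def)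
    have Gs: "(\<Sum>i\<in>{1..k}. lam i *\<^sub>R G S i) + (2*c) *\<^sub>R matrix_inv S = mat 1"
      if "F S = mat 1" for S
      by (rule G_sum[OF assms(4), of "G S" S "P S" c]) (use that in \<open>simp_all add: G_def F_def\<close>)
    have U: "S = S0" if "pos_def S" "F S = mat 1" for S
    proof (rule uniq_core[where a = "2*c" and I = "{1..k}" and lam = lam and G = "G S" and G' = "G S0" and Sm = Sig])
      show "0 < 2 * c" using c by simp
      show "finite {1..k}" by simp
      show "\<forall>i\<in>{1..k}. 0 \<le> lam i" by (rule lam0)
      show "pos_def S" "pos_def S0" by (rule that(1), rule pS0)
      show "\<forall>i\<in>{1..k}. pos_def (G S i) \<and> pos_def (G S0 i) \<and> G S i ** S ** G S i + (2 * c) *\<^sub>R G S i = Sig i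
            \<and> G S0 i ** S0 ** G S0 i + (2 * c) *\<^sub>R G S0 i = Sig i"
        using Gprops that(1) pS0 by blast
      show "(\<Sum>i\<in>{1..k}. lam i *\<^sub>R G S i) + (2 * c) *\<^sub>R matrix_inv S = mat 1" by (rule Gs[OF that(2)])
      show "(\<Sum>i\<in>{1..k}. lam i *\<^sub>R G S0 i) + (2 * c) *\<^sub>R matrix_inv S0 = mat 1" by (rule Gs[OF F0])
    qed
    show ?thesis using pS0 F0 U by blast
  qed
  then show ?thesis by (simp add: F_def P_def c_def)
qed

end
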